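(* For all integers $m,n\geq 1$, \[p^{ed}_{od}(m,n)-p^{ed}_{od}(m,n-1)=D_e(m,n-1)+D_e(m-1,n-1)-D_o(m,n-1).\]
   Context: $\mathcal{P}^{ed}_{od}$ is the set of integer partitions such that: - all parts are distinct; - every odd part is smaller than every even part; - at least one odd part appears. For integers $m,n\ge 0$: - $p^{ed}_{od}(m,n)$ is the number of partitions of $n$ in $\mathcal{P}^{ed}_{od}$ with exactly $m$ parts; in particular $p^{ed}_{od}(m,0)=0$. - $D_o(m,n)$ is the number of partitions of $n$ into exactly $m$ distinct odd parts. - $D_e(m,n)$ is the number of partitions of $n$ into exactly $m$ distinct even parts. - By convention $D_e(0,n)=D_o(0,n)$ equals $1$ if $n=0$ and $0$ otherwise. *)

theory Defs
  imports Main
begin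

text \<open>A partition into distinct parts is represented by the finite set of its parts
  (all positive). Its size is the sum of the set, the number of parts is its cardinality.\<close>

definition distinct_partitions :: "nat \<Rightarrow> nat \<Rightarrow> nat set set" where
  "distinct_partitions m n = {S. finite S \<and> 0 \<notin> S \<and> \<Sum>S = n \<and> card S = m}"

definition p_ed_od :: "nat \<Rightarrow> nat \<Rightarrow> nat" where
  "p_ed_od m n = card {S \<in> distinct_partitions m n.
      (\<forall>a\<in>S. \<forall>b\<in>S. odd a \<and> even b \<longrightarrow> a < b) \<and> (\<exists>a\<in>S. odd a)}"

definition D_o :: "nat \<Rightarrow> nat \<Rightarrow> nat" where
  "D_o m n = card {S \<in> distinct_partitions m n. \<forall>a\<in>S. odd a}"

definition D_e :: "nat \<Rightarrow> nat \<Rightarrow> nat" where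
  "D_e m n = card {S \<in> distinct_partitions m n. \<forall>a\<in>S. even a}"

end

theory Submission
  imports Defs
begin

definition goodP :: "nat set \<Rightarrow> bool" where
  "goodP S \<longleftrightarrow> (\<forall>a\<in>S. \<forall>b\<in>S. odd a \<and> even b \<longrightarrow> a < b)"

lemma fin_dp: "finite (distinct_partitions m n)"
proof -
  have "distinct_partitions m n \<subseteq> Pow {..n}"
    unfolding distinct_partitions_def
    by (auto intro: member_le_sum)
  then show ?thesis by (rule finite_subset) simp
qed

lemma swap_sum:
  fixes S :: "nat set"
  assumes "finite S" "a \<in> S" "b \<notin> S"
  shows "\<Sum>(insert b (S - {a})) + a = \<Sum>S + b"
proof -
  have "\<Sum>(insert b (S - {a})) = b + \<Sum>(S - {a})"
    using assms by (subst sum.insert) auto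
  moreover have "\<Sum>S = a + \<Sum>(S - {a})" using assms by (simp add: sum.remove)
  ultimately show ?thesis by simp
qed

lemma swap_card:
  assumes "finite S" "a \<in> S" "b \<notin> S"
  shows "card (insert b (S - {a})) = card S"
  proof -
  have "card S > 0" using assms card_gt_0_iff by blast
  then show ?thesis using assms by (simp add: card.insert_remove)
qed

lemma bij1:
  assumes "m \<ge> 1" "n \<ge> 1"
  shows "bij_betw (\<lambda>S. S - {1})
    {S\<in>distinct_partitions m n. goodP S \<and> (\<exists>a\<in>S. odd a) \<and> (\<forall>x\<in>S. odd x \<longrightarrow> x = 1)}
    {S\<in>distinct_partitions (m-1) (n-1). \<forall>a\<in>S. even a}"
proof (rule bij_betw_byWitness[where f'="\<lambda>T. insert 1 T"])
  show "\<forall>a\<in>{S\<in>distinct_partitions m n. goodP S \<and> (\<exists>a\<in>S. odd a) \<and> (\<forall>x\<in>S. odd x \<longrightarrow> x = 1)}.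
      insert 1 (a - {1}) = a"
  proof
    fix S assume "S \<in> {S\<in>distinct_partitions m n. goodP S \<and> (\<exists>a\<in>S. odd a) \<and> (\<forall>x\<in>S. odd x \<longrightarrow> x = 1)}"
    then have "1 \<in> S" by blast
    then show "insert 1 (S - {1}) = S" by (rule insert_Diff)
  qed
  show "\<forall>a'\<in>{S\<in>distinct_partitions (m-1) (n-1). \<forall>a\<in>S. even a}. insert 1 a' - {1} = a'"
  proof
    fix T assume "T \<in> {S\<in>distinct_partitions (m-1) (n-1). \<forall>a\<in>S. even a}"
    then have "1 \<notin> T" by fastforce
    then show "insert 1 T - {1} = T" by simp
  qed
  show "(\<lambda>S. S - {1}) ` {S\<in>distinct_partitions m n. goodP S \<and> (\<exists>a\<in>S. odd a) \<and> (\<forall>x\<in>S. odd x \<longrightarrow> x = 1)}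
      \<subseteq> {S\<in>distinct_partitions (m-1) (n-1). \<forall>a\<in>S. even a}"
  proof
    fix U assume "U \<in> (\<lambda>S. S - {1}) ` {S\<in>distinct_partitions m n. goodP S \<and> (\<exists>a\<in>S. odd a) \<and> (\<forall>x\<in>S. odd x \<longrightarrow> x = 1)}"
    then obtain S where U: "U = S - {1}" and S: "S \<in> distinct_partitions m n" "\<exists>a\<in>S. odd a" "\<forall>x\<in>S. odd x \<longrightarrow> x = 1"
      by blast
    have "1 \<in> S" using S(2,3) by blast
    have fS: "finite S" "0 \<notin> S" "\<Sum>S = n" "card S = m" using S(1) unfolding distinct_partitions_def by blast+
    have s: "\<Sum>S = 1 + \<Sum>(S - {1})" using fS(1) \<open>1\<in>S\<close> by (rule sum.remove)
    have c: "card (S - {1}) = m - 1" using fS(1,4) \<open>1\<in>S\<close> by simp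
    have e: "\<forall>a\<in>S - {1}. even a" using S(3) by blast
    have "S - {1} \<in> distinct_partitions (m-1) (n-1)"
      unfolding distinct_partitions_def using fS s c by simp
    then show "U \<in> {S\<in>distinct_partitions (m-1) (n-1). \<forall>a\<in>S. even a}" using e U by blast
  qed
  show "(\<lambda>T. insert 1 T) ` {S\<in>distinct_partitions (m-1) (n-1). \<forall>a\<in>S. even a}
     \<subseteq> {S\<in>distinct_partitions m n. goodP S \<and> (\<exists>a\<in>S. odd a) \<and> (\<forall>x\<in>S. odd x \<longrightarrow> x = 1)}"
  proof
    fix U assume "U \<in> (\<lambda>T. insert 1 T) ` {S\<in>distinct_partitions (m-1) (n-1). \<forall>a\<in>S. even a}"
    then obtain T where U: "U = insert 1 T" and T: "T \<in> distinct_partitions (m-1) (n-1)" "\<forall>a\<in>T. even a"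
      by blast
    have fT: "finite T" "0 \<notin> T" "\<Sum>T = n-1" "card T = m-1" using T(1) unfolding distinct_partitions_def by blast+
    have "1 \<notin> T" using T(2) by fastforce
    have g: "goodP (insert 1 T)"
      unfolding goodP_def
    proof (intro ballI impI)
      fix a b assume ab: "a \<in> insert 1 T" "b \<in> insert 1 T" "odd a \<and> even b"
      have "a = 1" using ab(1,3) T(2) by blast
      have "b \<in> T" using ab(2,3) by fastforce
      then have "b \<noteq> 0" using fT(2) by metis
      then have "b \<ge> 2" using ab(3) by presburger
      then show "a < b" using \<open>a = 1\<close> by simp
    qed
    have s: "\<Sum>(insert 1 T) = n" using fT \<open>1\<notin>T\<close> assms(2) by simp
    have c: "card (insert 1 T) = m" using fT \<open>1\<notin>T\<close> assms(1) by simp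
    have o: "\<forall>x\<in>insert 1 T. odd x \<longrightarrow> x = 1" using T(2) by blast
    have "insert 1 T \<in> distinct_partitions m n"
      unfolding distinct_partitions_def using fT s c by simp
    then show "U \<in> {S\<in>distinct_partitions m n. goodP S \<and> (\<exists>a\<in>S. odd a) \<and> (\<forall>x\<in>S. odd x \<longrightarrow> x = 1)}"
      using g o U by simp
  qed
qed

definition mo :: "nat set \<Rightarrow> nat" where "mo S = Max {x\<in>S. odd x}"
definition me :: "nat set \<Rightarrow> nat" where "me T = Min {x\<in>T. even x}"

lemma mo_props:
  assumes "finite S" "\<exists>a\<in>S. odd a"
  shows "mo S \<in> S" "odd (mo S)" "\<And>x. x \<in> S \<Longrightarrow> odd x \<Longrightarrow> x \<le> mo S"
proof -
  have f: "finite {x\<in>S. odd x}" "{x\<in>S. odd x} \<noteq> {}" using assms by auto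
  have "mo S \<in> {x\<in>S. odd x}" unfolding mo_def using Max_in[OF f] .
  then show "mo S \<in> S" "odd (mo S)" by auto
  show "\<And>x. x \<in> S \<Longrightarrow> odd x \<Longrightarrow> x \<le> mo S" unfolding mo_def using f(1) by (intro Max_ge) auto
qed

lemma me_props:
  assumes "finite S" "\<exists>a\<in>S. even a"
  shows "me S \<in> S" "even (me S)" "\<And>x. x \<in> S \<Longrightarrow> even x \<Longrightarrow> me S \<le> x"
proof -
  have f: "finite {x\<in>S. even x}" "{x\<in>S. even x} \<noteq> {}" using assms by auto
  have "me S \<in> {x\<in>S. even x}" unfolding me_def using Min_in[OF f] .
  then show "me S \<in> S" "even (me S)" by auto
  show "\<And>x. x \<in> S \<Longrightarrow> even x \<Longrightarrow> me S \<le> x" unfolding me_def using f(1) by (intro Min_le) auto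
qed

lemma bij2:
  assumes "m \<ge> 1" "n \<ge> 1"
  shows "bij_betw (\<lambda>S. insert (mo S - 1) (S - {mo S}))
    {S\<in>distinct_partitions m n. goodP S \<and> (\<exists>a\<in>S. odd a) \<and> \<not>(\<forall>x\<in>S. odd x \<longrightarrow> x = 1)}
    {T\<in>distinct_partitions m (n-1). goodP T \<and> (\<exists>b\<in>T. even b)}"
proof (rule bij_betw_byWitness[where f'="\<lambda>T. insert (me T + 1) (T - {me T})"])
  have fw: "\<And>S. S\<in>distinct_partitions m n \<Longrightarrow> goodP S \<Longrightarrow> (\<exists>a\<in>S. odd a) \<Longrightarrow> \<not>(\<forall>x\<in>S. odd x \<longrightarrow> x = 1) \<Longrightarrow>
     insert (mo S - 1) (S - {mo S}) \<in> {T\<in>distinct_partitions m (n-1). goodP T \<and> (\<exists>b\<in>T. even b)}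
     \<and> me (insert (mo S - 1) (S - {mo S})) = mo S - 1 \<and> mo S - 1 \<notin> S"
  proof -
    fix S assume S: "S \<in> distinct_partitions m n" "goodP S" "\<exists>a\<in>S. odd a" "\<not>(\<forall>x\<in>S. odd x \<longrightarrow> x = 1)"
    have fS: "finite S" "0 \<notin> S" "\<Sum>S = n" "card S = m" using S(1) by (auto simp: distinct_partitions_def)
    note mp = mo_props[OF fS(1) S(3)]
    obtain y where y: "y \<in> S" "odd y" "y \<noteq> 1" using S(4) by auto
    have "y \<ge> 3" using y(2,3) by presburger
    then have a3: "mo S \<ge> 3" using mp(3)[OF y(1,2)] by simp
    have ev: "even (mo S - 1)" using mp(2) a3 by simp
    have nin: "mo S - 1 \<notin> S"
    proof
      assume "mo S - 1 \<in> S"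
      then have "mo S < mo S - 1" using S(2) mp ev unfolding goodP_def by blast
      then show False by simp
    qed
    define T where "T = insert (mo S - 1) (S - {mo S})"
    have sT: "\<Sum>T + mo S = \<Sum>S + (mo S - 1)" unfolding T_def using swap_sum[OF fS(1) mp(1) nin] .
    have cT: "card T = m" unfolding T_def using swap_card[OF fS(1) mp(1) nin] fS by simp
    have gT: "goodP T" unfolding goodP_def T_def
    proof (intro ballI impI)
      fix a b assume ab: "a \<in> insert (mo S - 1) (S - {mo S})" "b \<in> insert (mo S - 1) (S - {mo S})" "odd a \<and> even b"
      then have aS: "a \<in> S" "a \<noteq> mo S" using ev a3 by auto
      then have "a < mo S" using mp(3)[OF aS(1)] ab(3) by simp
      then have "a < mo S - 1" using ab(3) mp(2) by presburger
      show "a < b"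
      proof (cases "b = mo S - 1")
        case True then show ?thesis using \<open>a < mo S - 1\<close> by simp
      next
        case False then have "b \<in> S" using ab by auto
        then show ?thesis using S(2) aS ab(3) unfolding goodP_def by blast
      qed
    qed
    have meT: "me T = mo S - 1"
    proof -
      have "finite T" unfolding T_def using fS by simp
      have ex: "\<exists>b\<in>T. even b" unfolding T_def using ev by auto
      note ep = me_props[OF \<open>finite T\<close> ex]
      have "mo S - 1 \<in> T" unfolding T_def by simp
      then have le: "me T \<le> mo S - 1" using ep(3) ev by simp
      have "\<not> me T < mo S - 1"
      proof
        assume "me T < mo S - 1"
        then have "me T \<in> S" using ep(1) unfolding T_def by auto
        then have "mo S < me T" using S(2) mp ep(2) unfolding goodP_def by blast
        then show False using \<open>me T < mo S - 1\<close> by simp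
      qed
      then show ?thesis using le by simp
    qed
    have "0 \<notin> T" unfolding T_def using fS(2) a3 by auto
    moreover have "finite T" unfolding T_def using fS by simp
    moreover have "\<Sum>T = n - 1" using sT fS(3) a3 by simp
    moreover have "\<exists>b\<in>T. even b" unfolding T_def using ev by blast
    ultimately have TB: "T \<in> {T\<in>distinct_partitions m (n-1). goodP T \<and> (\<exists>b\<in>T. even b)}"
      using cT gT unfolding distinct_partitions_def by blast
    show "insert (mo S - 1) (S - {mo S}) \<in> {T\<in>distinct_partitions m (n-1). goodP T \<and> (\<exists>b\<in>T. even b)}
     \<and> me (insert (mo S - 1) (S - {mo S})) = mo S - 1 \<and> mo S - 1 \<notin> S"
      using TB meT nin unfolding T_def by blast
  qed
  have bw: "\<And>T. T\<in>distinct_partitions m (n-1) \<Longrightarrow> goodP T \<Longrightarrow> (\<exists>b\<in>T. even b) \<Longrightarrow>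
     insert (me T + 1) (T - {me T}) \<in> {S\<in>distinct_partitions m n. goodP S \<and> (\<exists>a\<in>S. odd a) \<and> \<not>(\<forall>x\<in>S. odd x \<longrightarrow> x = 1)}
     \<and> mo (insert (me T + 1) (T - {me T})) = me T + 1 \<and> me T + 1 \<notin> T"
  proof -
    fix T assume T: "T\<in>distinct_partitions m (n-1)" "goodP T" "\<exists>b\<in>T. even b"
    have fT: "finite T" "0 \<notin> T" "\<Sum>T = n - 1" "card T = m" using T(1) by (auto simp: distinct_partitions_def)
    note ep = me_props[OF fT(1) T(3)]
    have "me T \<noteq> 0" using ep(1) fT(2) by metis
    then have c2: "me T \<ge> 2" using ep(2) by presburger
    have od: "odd (me T + 1)" using ep(2) by simp
    have nin: "me T + 1 \<notin> T"
    proof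
      assume "me T + 1 \<in> T"
      then have "me T + 1 < me T" using T(2) ep od unfolding goodP_def by blast
      then show False by simp
    qed
    define S where "S = insert (me T + 1) (T - {me T})"
    have sS: "\<Sum>S + me T = \<Sum>T + (me T + 1)" unfolding S_def using swap_sum[OF fT(1) ep(1) nin] .
    have cS: "card S = m" unfolding S_def using swap_card[OF fT(1) ep(1) nin] fT by simp
    have gS: "goodP S" unfolding goodP_def S_def
    proof (intro ballI impI)
      fix a b assume ab: "a \<in> insert (me T + 1) (T - {me T})" "b \<in> insert (me T + 1) (T - {me T})" "odd a \<and> even b"
      then have bS: "b \<in> T" "b \<noteq> me T" using od by auto
      then have "me T < b" using ep(3)[OF bS(1)] ab(3) by simp
      then have "me T + 1 < b" using ab(3) ep(2) by presburger
      show "a < b"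
      proof (cases "a = me T + 1")
        case True then show ?thesis using \<open>me T + 1 < b\<close> by simp
      next
        case False then have "a \<in> T" using ab by auto
        then show ?thesis using T(2) bS ab(3) unfolding goodP_def by blast
      qed
    qed
    have moS: "mo S = me T + 1"
    proof -
      have "finite S" unfolding S_def using fT by simp
      have ex: "\<exists>b\<in>S. odd b" unfolding S_def using od by auto
      note mp = mo_props[OF \<open>finite S\<close> ex]
      have "me T + 1 \<in> S" unfolding S_def by simp
      then have le: "me T + 1 \<le> mo S" using mp(3) od by simp
      have "\<not> me T + 1 < mo S"
      proof
        assume "me T + 1 < mo S"
        then have "mo S \<in> T" using mp(1) unfolding S_def by auto
        then have "mo S < me T" using T(2) ep mp(2) unfolding goodP_def by blast
        then show False using \<open>me T + 1 < mo S\<close> by simp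
      qed
      then show ?thesis using le by simp
    qed
    have "0 \<notin> S" unfolding S_def using fT(2) by auto
    moreover have "finite S" unfolding S_def using fT by simp
    moreover have "\<Sum>S = n" using sS fT(3) assms by simp
    moreover have "\<exists>x\<in>S. odd x \<and> x \<noteq> 1" unfolding S_def using od c2 by auto
    moreover have "\<exists>a\<in>S. odd a" unfolding S_def using od by blast
    ultimately have SA: "S \<in> {S\<in>distinct_partitions m n. goodP S \<and> (\<exists>a\<in>S. odd a) \<and> \<not>(\<forall>x\<in>S. odd x \<longrightarrow> x = 1)}"
      using cS gS unfolding distinct_partitions_def by blast
    show "insert (me T + 1) (T - {me T}) \<in> {S\<in>distinct_partitions m n. goodP S \<and> (\<exists>a\<in>S. odd a) \<and> \<not>(\<forall>x\<in>S. odd x \<longrightarrow> x = 1)}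
     \<and> mo (insert (me T + 1) (T - {me T})) = me T + 1 \<and> me T + 1 \<notin> T"
      using SA moS nin unfolding S_def by blast
  qed
  show "\<forall>a\<in>{S\<in>distinct_partitions m n. goodP S \<and> (\<exists>a\<in>S. odd a) \<and> \<not>(\<forall>x\<in>S. odd x \<longrightarrow> x = 1)}.
      insert (me (insert (mo a - 1) (a - {mo a})) + 1) (insert (mo a - 1) (a - {mo a}) - {me (insert (mo a - 1) (a - {mo a}))}) = a"
  proof
    fix S assume S: "S \<in> {S\<in>distinct_partitions m n. goodP S \<and> (\<exists>a\<in>S. odd a) \<and> \<not>(\<forall>x\<in>S. odd x \<longrightarrow> x = 1)}"
    then have e: "me (insert (mo S - 1) (S - {mo S})) = mo S - 1" and nin: "mo S - 1 \<notin> S" using fw by blast+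
    have "finite S" "\<exists>a\<in>S. odd a" using S by (auto simp: distinct_partitions_def)
    note mp = mo_props[OF this]
    have "mo S \<ge> 1" using mp(2) by (cases "mo S") auto
    then have h: "mo S - 1 + 1 = mo S" by simp
    show "insert (me (insert (mo S - 1) (S - {mo S})) + 1) (insert (mo S - 1) (S - {mo S}) - {me (insert (mo S - 1) (S - {mo S}))}) = S"
      unfolding e h using mp(1) nin by blast
  qed
  show "\<forall>a'\<in>{T\<in>distinct_partitions m (n-1). goodP T \<and> (\<exists>b\<in>T. even b)}.
      insert (mo (insert (me a' + 1) (a' - {me a'})) - 1) (insert (me a' + 1) (a' - {me a'}) - {mo (insert (me a' + 1) (a' - {me a'}))}) = a'"
  proof
    fix T assume T: "T \<in> {T\<in>distinct_partitions m (n-1). goodP T \<and> (\<exists>b\<in>T. even b)}"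
    then have e: "mo (insert (me T + 1) (T - {me T})) = me T + 1" and nin: "me T + 1 \<notin> T" using bw by blast+
    have "finite T" "\<exists>a\<in>T. even a" using T by (auto simp: distinct_partitions_def)
    note ep = me_props[OF this]
    show "insert (mo (insert (me T + 1) (T - {me T})) - 1) (insert (me T + 1) (T - {me T}) - {mo (insert (me T + 1) (T - {me T}))}) = T"
      unfolding e using ep(1) nin by auto
  qed
  show "(\<lambda>S. insert (mo S - 1) (S - {mo S})) ` {S\<in>distinct_partitions m n. goodP S \<and> (\<exists>a\<in>S. odd a) \<and> \<not>(\<forall>x\<in>S. odd x \<longrightarrow> x = 1)}
      \<subseteq> {T\<in>distinct_partitions m (n-1). goodP T \<and> (\<exists>b\<in>T. even b)}"
    using fw by blast
  show "(\<lambda>T. insert (me T + 1) (T - {me T})) ` {T\<in>distinct_partitions m (n-1). goodP T \<and> (\<exists>b\<in>T. even b)}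
      \<subseteq> {S\<in>distinct_partitions m n. goodP S \<and> (\<exists>a\<in>S. odd a) \<and> \<not>(\<forall>x\<in>S. odd x \<longrightarrow> x = 1)}"
    using bw by blast
qed


lemma arith_aux: "(p1::nat) = a + (e + b) \<Longrightarrow> p2 = e + c \<Longrightarrow> int p1 - int p2 = int b + int a - int c"
  by simp

lemma dp_ne: "T \<in> distinct_partitions m k \<Longrightarrow> m \<ge> 1 \<Longrightarrow> T \<noteq> {}"
  by (auto simp: distinct_partitions_def)

theorem mainTheorem4:
  fixes m n :: nat
  assumes "m \<ge> 1" and "n \<ge> 1"
  shows "int (p_ed_od m n) - int (p_ed_od m (n - 1))
         = int (D_e m (n - 1)) + int (D_e (m - 1) (n - 1)) - int (D_o m (n - 1))"
proof -
  let ?A1 = "{S\<in>distinct_partitions m n. goodP S \<and> (\<exists>a\<in>S. odd a) \<and> (\<forall>x\<in>S. odd x \<longrightarrow> x = 1)}"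
  let ?A2 = "{S\<in>distinct_partitions m n. goodP S \<and> (\<exists>a\<in>S. odd a) \<and> \<not>(\<forall>x\<in>S. odd x \<longrightarrow> x = 1)}"
  let ?B = "{T\<in>distinct_partitions m (n-1). goodP T \<and> (\<exists>b\<in>T. even b)}"
  let ?E = "{T\<in>distinct_partitions m (n-1). goodP T \<and> (\<exists>b\<in>T. even b) \<and> (\<exists>a\<in>T. odd a)}"
  let ?De = "{T\<in>distinct_partitions m (n-1). \<forall>a\<in>T. even a}"
  let ?Do = "{T\<in>distinct_partitions m (n-1). \<forall>a\<in>T. odd a}"
  have fin: "finite {S\<in>distinct_partitions k j. P S}" for k j P using fin_dp by simp
  have "p_ed_od m n = card (?A1 \<union> ?A2)"
    unfolding p_ed_od_def goodP_def by (rule arg_cong[where f=card]) auto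
  also have "\<dots> = card ?A1 + card ?A2" by (rule card_Un_disjoint) (use fin in auto)
  also have "card ?A1 = D_e (m-1) (n-1)" unfolding D_e_def using bij_betw_same_card[OF bij1[OF assms]] .
  also have "card ?A2 = card ?B" using bij_betw_same_card[OF bij2[OF assms]] .
  also have "?B = ?E \<union> ?De"
    using dp_ne[OF _ assms(1)] unfolding goodP_def by (auto, meson ex_in_conv)
  also have "card (?E \<union> ?De) = card ?E + card ?De" by (rule card_Un_disjoint) (use fin in auto)
  finally have 1: "p_ed_od m n = D_e (m-1) (n-1) + (card ?E + D_e m (n-1))" unfolding D_e_def .
  have "p_ed_od m (n-1) = card (?E \<union> ?Do)"
    unfolding p_ed_od_def goodP_def using dp_ne[OF _ assms(1)] by (intro arg_cong[where f=card]) (auto, meson ex_in_conv)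
  also have "\<dots> = card ?E + card ?Do" by (rule card_Un_disjoint) (use fin in auto)
  finally have 2: "p_ed_od m (n-1) = card ?E + D_o m (n-1)" unfolding D_o_def .
  show ?thesis using arith_aux[OF 1 2] by blast
qed

end
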